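(* Let $n=1$, $\omega>0$. For $\hbar\in]0,1]$ let $a^\hbar$ solve $$ i\hbar\partial_t a^\hbar+\frac{\hbar^2}{2}\partial_x^2a^\hbar=\frac{\omega^2}{2}x^2a^\hbar+\hbar^2F^\hbar(a^\hbar)+\hbar^2S^\hbar,\qquad a^\hbar_{\mid t=0}=0.$$ Assume that there exists $C_0>0$ such that for all $t<\pi/(2\omega)$, $$\|F^\hbar(a^\hbar)(t)\|_{L^2}\leq\frac{C_0}{\left(\frac{\pi}{2\omega}-t\right)^2}\|a^\hbar(t)\|_{L^2}.$$ Then there exists $C>0$ independent of $\hbar\in]0,1]$ such that for every $\Lambda\geq1$, $$\sup_{0\leq t\leq\frac{\pi}{2\omega}-\Lambda\hbar}\|a^\hbar(t)\|_{L^2}\leq C\hbar\int_0^{\pi/(2\omega)-\Lambda\hbar}\|S^\hbar(t)\|_{L^2}\,dt.$$ *)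

theory Defs
  imports "HOL-Analysis.Analysis"
begin

definition sq_int :: "(real \<Rightarrow> complex) \<Rightarrow> bool" where
  "sq_int f \<longleftrightarrow> f \<in> borel_measurable lborel \<and> integrable lborel (\<lambda>x. (cmod (f x))\<^sup>2)"

definition L2norm :: "(real \<Rightarrow> complex) \<Rightarrow> real" where
  "L2norm f = sqrt (\<integral>x. (cmod (f x))\<^sup>2 \<partial>lborel)"

text \<open>Strong solution on the time interval [0,T) of
  i h d_t a + h^2/2 d_x^2 a = omega^2/2 x^2 a + h^2 G + h^2 S,  a(0) = 0,
  where G stands for the nonlinear term F^h(a^h).  Here dt, dx, dxx are the
  (classical) partial derivatives; the solution is required to lie, at each time,
  in the natural energy space (a, d_x a, d_x^2 a, x^2 a in L2) and to be
  differentiable in time as an L2-valued curve; the source is jointly measurable.\<close>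

definition harmonic_solution ::
  "real \<Rightarrow> real \<Rightarrow> real \<Rightarrow> (real \<Rightarrow> real \<Rightarrow> complex) \<Rightarrow> (real \<Rightarrow> real \<Rightarrow> complex)
     \<Rightarrow> (real \<Rightarrow> real \<Rightarrow> complex) \<Rightarrow> bool" where
  "harmonic_solution \<omega> h T a G S \<longleftrightarrow>
    (\<exists>dt dx dxx :: real \<Rightarrow> real \<Rightarrow> complex.
      (\<forall>x. a 0 x = 0) \<and>
      (\<forall>t\<in>{0..<T}. \<forall>x. ((\<lambda>s. a s x) has_vector_derivative dt t x) (at t within {0..<T})) \<and>
      (\<forall>t\<in>{0..<T}. \<forall>x. ((a t) has_vector_derivative dx t x) (at x)
                         \<and> ((dx t) has_vector_derivative dxx t x) (at x)) \<and>
      (\<forall>t\<in>{0..<T}. \<forall>x.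
          \<i> * complex_of_real h * dt t x + complex_of_real (h\<^sup>2 / 2) * dxx t x
          = complex_of_real (\<omega>\<^sup>2 / 2 * x\<^sup>2) * a t x
            + complex_of_real (h\<^sup>2) * G t x + complex_of_real (h\<^sup>2) * S t x) \<and>
      (\<forall>t\<in>{0..<T}. sq_int (a t) \<and> sq_int (dx t) \<and> sq_int (dxx t)
                     \<and> sq_int (\<lambda>x. complex_of_real (x\<^sup>2) * a t x)
                     \<and> sq_int (dt t) \<and> sq_int (G t) \<and> sq_int (S t)) \<and>
      (\<forall>t\<in>{0..<T}.
          ((\<lambda>s. L2norm (\<lambda>x. (a s x - a t x) / complex_of_real (s - t) - dt t x))
             \<longlongrightarrow> 0) (at t within {0..<T})) \<and>
      (\<lambda>p. S (fst p) (snd p)) \<in> borel_measurable (lborel \<Otimes>\<^sub>M lborel))"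

end

theory Submission
  imports Defs
begin

lemma sq_intD: assumes "sq_int f"
  shows "f \<in> borel_measurable lborel" "integrable lborel (\<lambda>x. (cmod (f x))\<^sup>2)"
  using assms unfolding sq_int_def by auto

lemma prod_integrable:
  assumes "sq_int f" "sq_int g"
  shows "integrable lborel (\<lambda>x. cmod (f x) * cmod (g x))"
proof (rule Bochner_Integration.integrable_bound)
  show "integrable lborel (\<lambda>x. ((cmod (f x))\<^sup>2 + (cmod (g x))\<^sup>2))"
    using sq_intD[OF assms(1)] sq_intD[OF assms(2)] by auto
  show "(\<lambda>x. cmod (f x) * cmod (g x)) \<in> borel_measurable lborel"
    using sq_intD[OF assms(1)] sq_intD[OF assms(2)] by measurable
  show "AE x in lborel. norm (cmod (f x) * cmod (g x)) \<le> norm ((cmod (f x))\<^sup>2 + (cmod (g x))\<^sup>2)"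
  proof (rule AE_I2)
    fix x
    have "2 * (cmod (f x) * cmod (g x)) \<le> (cmod (f x))\<^sup>2 + (cmod (g x))\<^sup>2"
      using sum_squares_bound[of "cmod (f x)" "cmod (g x)"] by simp
    moreover have "norm (cmod (f x) * cmod (g x)) = cmod (f x) * cmod (g x)" by simp
    moreover have "norm ((cmod (f x))\<^sup>2 + (cmod (g x))\<^sup>2) = (cmod (f x))\<^sup>2 + (cmod (g x))\<^sup>2" by simp
    moreover have "0 \<le> cmod (f x) * cmod (g x)" by simp
    ultimately show "norm (cmod (f x) * cmod (g x)) \<le> norm ((cmod (f x))\<^sup>2 + (cmod (g x))\<^sup>2)"
      by linarith
  qed
qed

lemma bound_integrable:
  fixes h :: "real \<Rightarrow> real"
  assumes "sq_int f" "sq_int g" "h \<in> borel_measurable lborel"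
    and "\<And>x. norm (h x) \<le> cmod (f x) * cmod (g x)"
  shows "integrable lborel h"
proof (rule Bochner_Integration.integrable_bound[OF prod_integrable[OF assms(1,2)] assms(3)])
  show "AE x in lborel. norm (h x) \<le> norm (cmod (f x) * cmod (g x))"
    using assms(4) by (auto intro!: AE_I2 simp: abs_mult)
qed

lemma CS_real:
  fixes P A B :: real
  assumes "P \<ge> 0" "A \<ge> 0" "B \<ge> 0" "\<And>t. t > 0 \<Longrightarrow> 2*t*P \<le> t\<^sup>2*A + B"
  shows "P \<le> sqrt A * sqrt B"
proof -
  have "P\<^sup>2 \<le> A * B"
  proof (cases "P = 0")
    case True then show ?thesis using assms by simp
  next
    case False
    then have P: "P > 0" using assms by simp
    show ?thesis
    proof (cases "A = 0")
      case True
      have "2 * ((B+1)/(2*P)) * P \<le> ((B+1)/(2*P))\<^sup>2*A + B"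
        using assms(4)[of "(B+1)/(2*P)"] P assms by simp
      then show ?thesis using True P by simp
    next
      case False
      then have A: "A > 0" using assms by simp
      have "2 * (P/A) * P \<le> (P/A)\<^sup>2*A + B"
        using assms(4)[of "P/A"] P A by simp
      then have "2 * P\<^sup>2 / A \<le> P\<^sup>2 / A + B"
        using A by (simp add: power2_eq_square field_simps)
      then have "P\<^sup>2 / A \<le> B" by simp
      then show ?thesis using A by (simp add: field_simps mult.commute)
    qed
  qed
  then have "sqrt (P\<^sup>2) \<le> sqrt (A*B)" by (rule real_sqrt_le_mono)
  then show ?thesis using assms(1) by (simp add: real_sqrt_mult)
qed

lemma CS:
  assumes "sq_int f" "sq_int g"
  shows "(\<integral>x. cmod (f x) * cmod (g x) \<partial>lborel) \<le> L2norm f * L2norm g"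
  unfolding L2norm_def
proof (rule CS_real)
  note i1 = sq_intD(2)[OF assms(1)] and i2 = sq_intD(2)[OF assms(2)]
  note ip = prod_integrable[OF assms]
  show "0 \<le> (\<integral>x. cmod (f x) * cmod (g x) \<partial>lborel)" by (rule integral_nonneg_AE) auto
  show "0 \<le> (\<integral>x. (cmod (f x))\<^sup>2 \<partial>lborel)" by (rule integral_nonneg_AE) auto
  show "0 \<le> (\<integral>x. (cmod (g x))\<^sup>2 \<partial>lborel)" by (rule integral_nonneg_AE) auto
  fix t :: real assume "t > 0"
  have "2*t*(\<integral>x. cmod (f x) * cmod (g x) \<partial>lborel) = (\<integral>x. 2*t*(cmod (f x) * cmod (g x)) \<partial>lborel)"
    by simp
  also have "\<dots> \<le> (\<integral>x. t\<^sup>2 * (cmod (f x))\<^sup>2 + (cmod (g x))\<^sup>2 \<partial>lborel)"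
  proof (rule integral_mono)
    show "integrable lborel (\<lambda>x. 2*t*(cmod (f x) * cmod (g x)))" using ip by simp
    show "integrable lborel (\<lambda>x. t\<^sup>2 * (cmod (f x))\<^sup>2 + (cmod (g x))\<^sup>2)" using i1 i2 by simp
    fix x
    have "0 \<le> (t * cmod (f x) - cmod (g x))\<^sup>2" by simp
    then show "2*t*(cmod (f x) * cmod (g x)) \<le> t\<^sup>2 * (cmod (f x))\<^sup>2 + (cmod (g x))\<^sup>2"
      by (simp add: power2_eq_square algebra_simps)
  qed
  also have "\<dots> = t\<^sup>2 * (\<integral>x. (cmod (f x))\<^sup>2 \<partial>lborel) + (\<integral>x. (cmod (g x))\<^sup>2 \<partial>lborel)"
    using i1 i2 by simp
  finally show "2*t*(\<integral>x. cmod (f x) * cmod (g x) \<partial>lborel) \<le> t\<^sup>2 * (\<integral>x. (cmod (f x))\<^sup>2 \<partial>lborel) + (\<integral>x. (cmod (g x))\<^sup>2 \<partial>lborel)" .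
qed

lemma lim_zero_top:
  fixes g :: "real \<Rightarrow> real"
  assumes int: "integrable lborel g" and lim: "(g \<longlongrightarrow> L) at_top"
  shows "L = 0"
proof (rule ccontr)
  assume "L \<noteq> 0"
  then have Lp: "\<bar>L\<bar> / 2 > 0" by simp
  have "eventually (\<lambda>x. dist (g x) L < \<bar>L\<bar> / 2) at_top"
    using lim Lp tendsto_iff by blast
  then obtain B where B: "\<And>x. x \<ge> B \<Longrightarrow> dist (g x) L < \<bar>L\<bar> / 2"
    by (auto simp: eventually_at_top_linorder)
  have gB: "\<bar>L\<bar> / 2 \<le> \<bar>g x\<bar>" if "x \<ge> B" for x
    using B[OF that] by (simp add: dist_real_def) (smt (verit))
  define I where "I = (\<integral>x. \<bar>g x\<bar> \<partial>lborel)"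
  define b where "b = B + 2 * (I + 1) / \<bar>L\<bar>"
  have I0: "I \<ge> 0" unfolding I_def by (rule integral_nonneg_AE) auto
  have bB: "b - B = 2 * (I + 1) / \<bar>L\<bar>" unfolding b_def by simp
  moreover have "2 * (I + 1) / \<bar>L\<bar> \<ge> 0" using I0 Lp by simp
  ultimately have bB': "B \<le> b" by linarith
  have ai: "integrable lborel (\<lambda>x. \<bar>g x\<bar>)" using int by simp
  have "(\<integral>x. \<bar>L\<bar> / 2 * indicator {B..b} x \<partial>lborel) \<le> (\<integral>x. \<bar>g x\<bar> * indicator {B..b} x \<partial>lborel)"
  proof (rule integral_mono)
    show "integrable lborel (\<lambda>x. \<bar>L\<bar> / 2 * indicator {B..b} x :: real)"
      by (intro integrable_mult_right integrable_real_indicator) (auto simp: emeasure_lborel_Icc_eq)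
    show "integrable lborel (\<lambda>x. \<bar>g x\<bar> * indicator {B..b} x :: real)"
      by (rule integrable_real_mult_indicator) (use ai in auto)
    fix x show "\<bar>L\<bar> / 2 * indicator {B..b} x \<le> \<bar>g x\<bar> * indicator {B..b} x"
      using gB by (auto split: split_indicator)
  qed
  also have "\<dots> \<le> I" unfolding I_def
  proof (rule integral_mono)
    show "integrable lborel (\<lambda>x. \<bar>g x\<bar> * indicator {B..b} x :: real)"
      by (rule integrable_real_mult_indicator) (use ai in auto)
    show "integrable lborel (\<lambda>x. \<bar>g x\<bar>)" by (rule ai)
    fix x show "\<bar>g x\<bar> * indicator {B..b} x \<le> \<bar>g x\<bar>"
      by (auto split: split_indicator)
  qed
  finally have "\<bar>L\<bar> / 2 * (b - B) \<le> I" using bB' by simp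
  then show False using bB Lp by (simp add: field_simps)
qed

lemma lim_zero_bot:
  fixes g :: "real \<Rightarrow> real"
  assumes int: "integrable lborel g" and lim: "(g \<longlongrightarrow> L) at_bot"
  shows "L = 0"
proof (rule lim_zero_top)
  show "integrable lborel (\<lambda>x. g (- x))"
    using lborel_integrable_real_affine_iff[of "-1" g 0] int by simp
  show "((\<lambda>x. g (- x)) \<longlongrightarrow> L) at_top"
    using lim by (simp add: at_bot_mirror filterlim_filtermap)
qed

lemma ftc_set:
  fixes g g' :: "real \<Rightarrow> real"
  assumes der: "\<And>x. (g has_real_derivative g' x) (at x)"
    and int: "integrable lborel g'" and ab: "a \<le> b"
  shows "(LINT x:{a..b}|lborel. g' x) = g b - g a"
proof -
  have si: "set_integrable lborel {a..b} g'"
    unfolding set_integrable_def using int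
    by (intro integrable_mult_indicator) auto
  have "(g' has_integral (g b - g a)) {a..b}"
    by (rule fundamental_theorem_of_calculus[OF ab])
       (use der in \<open>auto simp: has_real_derivative_iff_has_vector_derivative intro: has_vector_derivative_at_within\<close>)
  then show ?thesis using set_borel_integral_eq_integral(2)[OF si] integral_unique by metis
qed

lemma deriv_integral_zero:
  fixes g g' :: "real \<Rightarrow> real"
  assumes der: "\<And>x. (g has_real_derivative g' x) (at x)"
    and intg: "integrable lborel g" and int: "integrable lborel g'"
  shows "(\<integral>x. g' x \<partial>lborel) = 0"
proof -
  have sP: "set_integrable lborel {0..} g'"
    unfolding set_integrable_def using int by (intro integrable_mult_indicator) auto
  have sQ: "set_integrable lborel {..0} g'"
    unfolding set_integrable_def using int by (intro integrable_mult_indicator) auto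
  define P where "P = (LINT x:{0..}|lborel. g' x)"
  define Q where "Q = (LINT x:{..0}|lborel. g' x)"
  have tP: "((\<lambda>b. LINT x:{0..b}|lborel. g' x) \<longlongrightarrow> P) at_top"
    unfolding P_def by (rule tendsto_set_lebesgue_integral_at_top[OF _ sP]) auto
  have tQ: "((\<lambda>a. LINT x:{a..0}|lborel. g' x) \<longlongrightarrow> Q) at_bot"
    unfolding Q_def by (rule tendsto_set_lebesgue_integral_at_bot[OF _ sQ]) auto
  have "((\<lambda>b. g 0 + (LINT x:{0..b}|lborel. g' x)) \<longlongrightarrow> g 0 + P) at_top"
    by (intro tendsto_intros tP)
  moreover have "eventually (\<lambda>b. g 0 + (LINT x:{0..b}|lborel. g' x) = g b) at_top"
    using eventually_ge_at_top[of 0] by eventually_elim (simp add: ftc_set[OF der int])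
  ultimately have gtop: "(g \<longlongrightarrow> g 0 + P) at_top"
    using Lim_transform_eventually by fastforce
  have "((\<lambda>a. g 0 - (LINT x:{a..0}|lborel. g' x)) \<longlongrightarrow> g 0 - Q) at_bot"
    by (intro tendsto_intros tQ)
  moreover have "eventually (\<lambda>a. g 0 - (LINT x:{a..0}|lborel. g' x) = g a) at_bot"
    using eventually_le_at_bot[of 0] by eventually_elim (simp add: ftc_set[OF der int])
  ultimately have gbot: "(g \<longlongrightarrow> g 0 - Q) at_bot"
    using Lim_transform_eventually by fastforce
  have z1: "g 0 + P = 0" by (rule lim_zero_top[OF intg gtop])
  have z2: "g 0 - Q = 0" by (rule lim_zero_bot[OF intg gbot])
  have s1: "(\<lambda>n. g (real n)) \<longlonglongrightarrow> 0"
    using filterlim_compose[OF gtop filterlim_real_sequentially] z1 by simp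
  have s2: "(\<lambda>n. g (- real n)) \<longlonglongrightarrow> 0"
    using filterlim_compose[OF gbot filterlim_compose[OF filterlim_uminus_at_bot_at_top filterlim_real_sequentially]] z2
    by (simp add: o_def)
  have "(\<lambda>n. g (real n) - g (- real n)) \<longlonglongrightarrow> 0 - 0"
    by (intro tendsto_intros s1 s2)
  moreover have "(\<lambda>n. g (real n) - g (- real n)) = (\<lambda>n. \<integral>x. indicator {- real n..real n} x *\<^sub>R g' x \<partial>lborel)"
    using ftc_set[OF der int] by (auto simp: set_lebesgue_integral_def)
  moreover have "(\<lambda>n. \<integral>x. indicator {- real n..real n} x *\<^sub>R g' x \<partial>lborel) \<longlonglongrightarrow> (\<integral>x. g' x \<partial>lborel)"
  proof (rule integral_dominated_convergence[where w="\<lambda>x. norm (g' x)"])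
    show "g' \<in> borel_measurable lborel" using int by auto
    show "(\<lambda>x. indicator {- real n..real n} x *\<^sub>R g' x) \<in> borel_measurable lborel" for n
      using int by auto
    show "integrable lborel (\<lambda>x. norm (g' x))" using int by auto
    show "AE x in lborel. (\<lambda>n. indicator {- real n..real n} x *\<^sub>R g' x) \<longlonglongrightarrow> g' x"
    proof (rule AE_I2)
      fix x :: real
      obtain N :: nat where "\<bar>x\<bar> \<le> real N" using real_arch_simple by blast
      then have "eventually (\<lambda>n. indicator {- real n..real n} x *\<^sub>R g' x = g' x) sequentially"
        unfolding eventually_sequentially
        by (intro exI[of _ N]) (auto split: split_indicator)
      then show "(\<lambda>n. indicator {- real n..real n} x *\<^sub>R g' x) \<longlonglongrightarrow> g' x"
        by (rule tendsto_eventually)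
    qed
    show "AE x in lborel. norm (indicator {- real n..real n} x *\<^sub>R g' x) \<le> norm (g' x)" for n
      by (auto split: split_indicator)
  qed
  ultimately show ?thesis using LIMSEQ_unique by fastforce
qed

lemma sq_int_add:
  assumes "sq_int f" "sq_int g" shows "sq_int (\<lambda>x. f x + g x)"
  unfolding sq_int_def
proof
  show m: "(\<lambda>x. f x + g x) \<in> borel_measurable lborel" using sq_intD(1)[OF assms(1)] sq_intD(1)[OF assms(2)] by auto
  show "integrable lborel (\<lambda>x. (cmod (f x + g x))\<^sup>2)"
  proof (rule Bochner_Integration.integrable_bound)
    show "integrable lborel (\<lambda>x. 2 * (cmod (f x))\<^sup>2 + 2 * (cmod (g x))\<^sup>2)"
      using sq_intD(2)[OF assms(1)] sq_intD(2)[OF assms(2)] by auto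
    show "(\<lambda>x. (cmod (f x + g x))\<^sup>2) \<in> borel_measurable lborel" using m by measurable
    show "AE x in lborel. norm ((cmod (f x + g x))\<^sup>2) \<le> norm (2 * (cmod (f x))\<^sup>2 + 2 * (cmod (g x))\<^sup>2)"
    proof (rule AE_I2)
      fix x
      have "cmod (f x + g x) \<le> cmod (f x) + cmod (g x)" by (rule norm_triangle_ineq)
      then have "(cmod (f x + g x))\<^sup>2 \<le> (cmod (f x) + cmod (g x))\<^sup>2"
        by (simp add: power_mono)
      also have "\<dots> \<le> 2 * (cmod (f x))\<^sup>2 + 2 * (cmod (g x))\<^sup>2"
        using sum_squares_bound[of "cmod (f x)" "cmod (g x)"] by (simp add: power2_eq_square algebra_simps)
      finally show "norm ((cmod (f x + g x))\<^sup>2) \<le> norm (2 * (cmod (f x))\<^sup>2 + 2 * (cmod (g x))\<^sup>2)"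
        by simp
    qed
  qed
qed

lemma sq_int_scale:
  assumes "sq_int f" shows "sq_int (\<lambda>x. c * f x)"
  unfolding sq_int_def
proof
  show "(\<lambda>x. c * f x) \<in> borel_measurable lborel" using sq_intD(1)[OF assms(1)] by auto
  have "integrable lborel (\<lambda>x. (cmod c)\<^sup>2 * (cmod (f x))\<^sup>2)"
    using sq_intD(2)[OF assms(1)] by auto
  then show "integrable lborel (\<lambda>x. (cmod (c * f x))\<^sup>2)"
    by (simp add: norm_mult power_mult_distrib)
qed

lemma sq_int_diff:
  assumes "sq_int f" "sq_int g" shows "sq_int (\<lambda>x. f x - g x)"
  using sq_int_add[OF assms(1) sq_int_scale[OF assms(2), of "-1"]] by simp

lemma sq_int_div:
  assumes "sq_int f" shows "sq_int (\<lambda>x. f x / c)"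
  using sq_int_scale[OF assms, of "inverse c"] by (simp add: field_simps)

lemma L2norm_sq: "sq_int f \<Longrightarrow> (L2norm f)\<^sup>2 = (\<integral>x. (cmod (f x))\<^sup>2 \<partial>lborel)"
  unfolding L2norm_def by (simp add: integral_nonneg_AE)

lemma L2norm_nonneg: "L2norm f \<ge> 0"
  unfolding L2norm_def by (simp add: integral_nonneg_AE)

lemma re_le: "norm (Re (a * cnj b)) \<le> cmod a * cmod b"
  using abs_Re_le_cmod[of "a * cnj b"] by (simp only: norm_mult complex_mod_cnj real_norm_def)

lemma im_le: "norm (Im (a * cnj b)) \<le> cmod a * cmod b"
  using abs_Im_le_cmod[of "a * cnj b"] by (simp only: norm_mult complex_mod_cnj real_norm_def)

lemma im_le': "Im (a * cnj b) \<le> cmod a * cmod b"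
  using im_le[of a b] abs_le_D1 by (metis real_norm_def)

lemma Re_integrable:
  assumes "sq_int f" "sq_int g" shows "integrable lborel (\<lambda>x. Re (f x * cnj (g x)))"
proof (rule bound_integrable[OF assms])
  show "(\<lambda>x. Re (f x * cnj (g x))) \<in> borel_measurable lborel"
    using sq_intD(1)[OF assms(1)] sq_intD(1)[OF assms(2)] by auto
  show "norm (Re (f x * cnj (g x))) \<le> cmod (f x) * cmod (g x)" for x by (rule re_le)
qed

lemma Im_integrable:
  assumes "sq_int f" "sq_int g" shows "integrable lborel (\<lambda>x. Im (f x * cnj (g x)))"
proof (rule bound_integrable[OF assms])
  show "(\<lambda>x. Im (f x * cnj (g x))) \<in> borel_measurable lborel"
    using sq_intD(1)[OF assms(1)] sq_intD(1)[OF assms(2)] by auto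
  show "norm (Im (f x * cnj (g x))) \<le> cmod (f x) * cmod (g x)" for x by (rule im_le)
qed

lemma Re_bound:
  assumes "sq_int f" "sq_int g" shows "\<bar>\<integral>x. Re (f x * cnj (g x)) \<partial>lborel\<bar> \<le> L2norm f * L2norm g"
proof -
  have "\<bar>\<integral>x. Re (f x * cnj (g x)) \<partial>lborel\<bar> \<le> (\<integral>x. \<bar>Re (f x * cnj (g x))\<bar> \<partial>lborel)"
    using integral_norm_bound[of lborel "\<lambda>x. Re (f x * cnj (g x))"] by simp
  also have "\<dots> \<le> (\<integral>x. cmod (f x) * cmod (g x) \<partial>lborel)"
  proof (rule integral_mono)
    show "integrable lborel (\<lambda>x. \<bar>Re (f x * cnj (g x))\<bar>)" using Re_integrable[OF assms] by auto
    show "integrable lborel (\<lambda>x. cmod (f x) * cmod (g x))" by (rule prod_integrable[OF assms])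
    show "\<bar>Re (f x * cnj (g x))\<bar> \<le> cmod (f x) * cmod (g x)" for x using re_le[of "f x" "g x"] by (simp only: real_norm_def)
  qed
  also have "\<dots> \<le> L2norm f * L2norm g" by (rule CS[OF assms])
  finally show ?thesis .
qed

lemma Im_bound:
  assumes "sq_int f" "sq_int g" shows "(\<integral>x. Im (f x * cnj (g x)) \<partial>lborel) \<le> L2norm f * L2norm g"
proof -
  have "(\<integral>x. Im (f x * cnj (g x)) \<partial>lborel) \<le> (\<integral>x. cmod (f x) * cmod (g x) \<partial>lborel)"
  proof (rule integral_mono)
    show "integrable lborel (\<lambda>x. Im (f x * cnj (g x)))" using Im_integrable[OF assms] by auto
    show "integrable lborel (\<lambda>x. cmod (f x) * cmod (g x))" by (rule prod_integrable[OF assms])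
    show "Im (f x * cnj (g x)) \<le> cmod (f x) * cmod (g x)" for x by (rule im_le')
  qed
  also have "\<dots> \<le> L2norm f * L2norm g" by (rule CS[OF assms])
  finally show ?thesis .
qed

lemma Im_dxx_zero:
  assumes d1: "\<And>x. (f has_vector_derivative df x) (at x)"
    and d2: "\<And>x. (df has_vector_derivative ddf x) (at x)"
    and s: "sq_int f" "sq_int df" "sq_int ddf"
  shows "(\<integral>x. Im (ddf x * cnj (f x)) \<partial>lborel) = 0"
proof (rule deriv_integral_zero)
  fix x
  have "((\<lambda>x. df x * cnj (f x)) has_vector_derivative (df x * cnj (df x) + ddf x * cnj (f x))) (at x)"
    by (intro has_vector_derivative_mult has_vector_derivative_cnj d1 d2)
  then have "((\<lambda>x. Im (df x * cnj (f x))) has_field_derivative Im (df x * cnj (df x) + ddf x * cnj (f x))) (at x)"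
    by (simp add: has_vector_derivative_complex_iff)
  moreover have "Im (df x * cnj (df x) + ddf x * cnj (f x)) = Im (ddf x * cnj (f x))"
    by simp
  ultimately show "((\<lambda>x. Im (df x * cnj (f x))) has_real_derivative Im (ddf x * cnj (f x))) (at x)"
    by simp
next
  show "integrable lborel (\<lambda>x. Im (df x * cnj (f x)))" by (rule Im_integrable[OF s(2,1)])
  show "integrable lborel (\<lambda>x. Im (ddf x * cnj (f x)))" by (rule Im_integrable[OF s(3,1)])
qed

lemma cmod_expand:
  fixes c :: real
  shows "(cmod (a + complex_of_real c * w))\<^sup>2 = (cmod a)\<^sup>2 + 2 * c * Re (w * cnj a) + c\<^sup>2 * (cmod w)\<^sup>2"
  unfolding cmod_power2 by (simp add: power2_eq_square algebra_simps)

lemma sq_sum_le: "(cmod (a + b))\<^sup>2 \<le> 2 * (cmod a)\<^sup>2 + 2 * (cmod b)\<^sup>2"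
proof -
  have "cmod (a + b) \<le> cmod a + cmod b" by (rule norm_triangle_ineq)
  then have "(cmod (a + b))\<^sup>2 \<le> (cmod a + cmod b)\<^sup>2" by (simp add: power_mono)
  also have "\<dots> \<le> 2 * (cmod a)\<^sup>2 + 2 * (cmod b)\<^sup>2"
    using sum_squares_bound[of "cmod a" "cmod b"] by (simp add: power2_eq_square algebra_simps)
  finally show ?thesis .
qed

lemma aux_abs:
  fixes X Y c :: real
  assumes "0 \<le> Y" shows "\<bar>2 * X + c * Y\<bar> \<le> 2 * \<bar>X\<bar> + \<bar>c\<bar> * Y"
proof -
  have "\<bar>2 * X + c * Y\<bar> \<le> \<bar>2 * X\<bar> + \<bar>c * Y\<bar>" by (rule abs_triangle_ineq)
  also have "\<bar>c * Y\<bar> = \<bar>c\<bar> * Y" using assms by (simp add: abs_mult)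
  finally show ?thesis by simp
qed

lemma L2_deriv:
  fixes u :: "real \<Rightarrow> real \<Rightarrow> complex" and v :: "real \<Rightarrow> complex"
  assumes su: "\<And>s. s \<in> D \<Longrightarrow> sq_int (u s)" and tD: "t \<in> D" and sv: "sq_int v"
    and lim: "((\<lambda>s. L2norm (\<lambda>x. (u s x - u t x) / complex_of_real (s - t) - v x)) \<longlongrightarrow> 0) (at t within D)"
  shows "((\<lambda>s. \<integral>x. (cmod (u s x))\<^sup>2 \<partial>lborel) has_real_derivative
           2 * (\<integral>x. Re (v x * cnj (u t x)) \<partial>lborel)) (at t within D)"
proof -
  define N where "N s = (\<integral>x. (cmod (u s x))\<^sup>2 \<partial>lborel)" for s
  define I0 where "I0 = (\<integral>x. Re (v x * cnj (u t x)) \<partial>lborel)"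
  define e where "e s x = (u s x - u t x) / complex_of_real (s - t) - v x" for s x
  define E where "E s = L2norm (e s)" for s
  have sut: "sq_int (u t)" using su tD by auto
  have se: "sq_int (e s)" if "s \<in> D" for s
    unfolding e_def by (intro sq_int_diff sq_int_div sv su that tD)
  have key: "(N s - N t) / (s - t) - 2 * I0 =
      2 * (\<integral>x. Re (e s x * cnj (u t x)) \<partial>lborel) + (s - t) * (\<integral>x. (cmod (v x + e s x))\<^sup>2 \<partial>lborel)"
    if sD: "s \<in> D" and st: "s \<noteq> t" for s
  proof -
    have sw: "sq_int (\<lambda>x. v x + e s x)" by (intro sq_int_add sv se sD)
    have pw: "u s x = u t x + complex_of_real (s - t) * (v x + e s x)" for x
      using st unfolding e_def by (simp add: field_simps)
    have "N s = (\<integral>x. (cmod (u t x))\<^sup>2 + 2 * (s - t) * Re ((v x + e s x) * cnj (u t x))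
                    + (s - t)\<^sup>2 * (cmod (v x + e s x))\<^sup>2 \<partial>lborel)"
      unfolding N_def pw cmod_expand ..
    also have "\<dots> = N t + 2 * (s - t) * (\<integral>x. Re ((v x + e s x) * cnj (u t x)) \<partial>lborel)
                    + (s - t)\<^sup>2 * (\<integral>x. (cmod (v x + e s x))\<^sup>2 \<partial>lborel)"
      using sq_intD(2)[OF sut] Re_integrable[OF sw sut] sq_intD(2)[OF sw]
      unfolding N_def by simp
    also have "(\<integral>x. Re ((v x + e s x) * cnj (u t x)) \<partial>lborel) = I0 + (\<integral>x. Re (e s x * cnj (u t x)) \<partial>lborel)"
      unfolding I0_def using Re_integrable[OF sv sut] Re_integrable[OF se[OF sD] sut]
      by (simp add: distrib_right)
    finally have "N s - N t = (s - t) * (2 * I0 + 2 * (\<integral>x. Re (e s x * cnj (u t x)) \<partial>lborel)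
          + (s - t) * (\<integral>x. (cmod (v x + e s x))\<^sup>2 \<partial>lborel))"
      by (simp add: power2_eq_square algebra_simps)
    then show ?thesis using st by simp
  qed
  have bnd: "norm ((N s - N t) / (s - t) - 2 * I0) \<le>
      2 * E s * L2norm (u t) + \<bar>s - t\<bar> * (2 * (L2norm v)\<^sup>2 + 2 * (E s)\<^sup>2)"
    if sD: "s \<in> D" and st: "s \<noteq> t" for s
  proof -
    have i1: "\<bar>\<integral>x. Re (e s x * cnj (u t x)) \<partial>lborel\<bar> \<le> E s * L2norm (u t)"
      unfolding E_def by (rule Re_bound[OF se[OF sD] sut])
    have sw: "sq_int (\<lambda>x. v x + e s x)" by (intro sq_int_add sv se sD)
    have i2: "(\<integral>x. (cmod (v x + e s x))\<^sup>2 \<partial>lborel) \<le> 2 * (L2norm v)\<^sup>2 + 2 * (E s)\<^sup>2"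
    proof -
      have "(\<integral>x. (cmod (v x + e s x))\<^sup>2 \<partial>lborel) \<le> (\<integral>x. 2 * (cmod (v x))\<^sup>2 + 2 * (cmod (e s x))\<^sup>2 \<partial>lborel)"
        by (rule integral_mono) (use sq_intD(2)[OF sw] sq_intD(2)[OF sv] sq_intD(2)[OF se[OF sD]] sq_sum_le in auto)
      also have "\<dots> = 2 * (L2norm v)\<^sup>2 + 2 * (E s)\<^sup>2"
        unfolding E_def L2norm_sq[OF sv] L2norm_sq[OF se[OF sD]]
        using sq_intD(2)[OF sv] sq_intD(2)[OF se[OF sD]] by simp
      finally show ?thesis .
    qed
    have i3: "0 \<le> (\<integral>x. (cmod (v x + e s x))\<^sup>2 \<partial>lborel)" by (rule integral_nonneg_AE) auto
    have "norm ((N s - N t) / (s - t) - 2 * I0) \<le>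
        2 * \<bar>\<integral>x. Re (e s x * cnj (u t x)) \<partial>lborel\<bar> + \<bar>s - t\<bar> * (\<integral>x. (cmod (v x + e s x))\<^sup>2 \<partial>lborel)"
      unfolding key[OF sD st] real_norm_def by (rule aux_abs[OF i3])
    also have "\<dots> \<le> 2 * E s * L2norm (u t) + \<bar>s - t\<bar> * (2 * (L2norm v)\<^sup>2 + 2 * (E s)\<^sup>2)"
      using i1 i2 by (intro add_mono mult_left_mono) auto
    finally show ?thesis .
  qed
  have Elim: "(E \<longlongrightarrow> 0) (at t within D)" unfolding E_def e_def by (rule lim)
  have "((\<lambda>s. s - t) \<longlongrightarrow> t - t) (at t within D)"
    by (intro tendsto_diff tendsto_ident_at tendsto_const)
  then have "((\<lambda>s. \<bar>s - t\<bar>) \<longlongrightarrow> \<bar>t - t\<bar>) (at t within D)" by (rule tendsto_rabs)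
  then have stlim: "((\<lambda>s. \<bar>s - t\<bar>) \<longlongrightarrow> 0) (at t within D)" by simp
  have "((\<lambda>s. 2 * E s * L2norm (u t) + \<bar>s - t\<bar> * (2 * (L2norm v)\<^sup>2 + 2 * (E s)\<^sup>2)) \<longlongrightarrow>
          2 * 0 * L2norm (u t) + 0 * (2 * (L2norm v)\<^sup>2 + 2 * 0\<^sup>2)) (at t within D)"
    by (intro tendsto_intros Elim stlim)
  then have blim: "((\<lambda>s. 2 * E s * L2norm (u t) + \<bar>s - t\<bar> * (2 * (L2norm v)\<^sup>2 + 2 * (E s)\<^sup>2)) \<longlongrightarrow> 0) (at t within D)"
    by simp
  have "((\<lambda>s. (N s - N t) / (s - t) - 2 * I0) \<longlongrightarrow> 0) (at t within D)"
  proof (rule Lim_null_comparison[OF _ blim])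
    show "\<forall>\<^sub>F s in at t within D. norm ((N s - N t) / (s - t) - 2 * I0) \<le>
        2 * E s * L2norm (u t) + \<bar>s - t\<bar> * (2 * (L2norm v)\<^sup>2 + 2 * (E s)\<^sup>2)"
      unfolding eventually_at_filter using bnd by (auto intro: always_eventually)
  qed
  then have "((\<lambda>s. (N s - N t) / (s - t)) \<longlongrightarrow> 2 * I0) (at t within D)"
    by (rule LIM_zero_cancel)
  then show ?thesis unfolding has_field_derivative_iff N_def I0_def .
qed

lemma energy_pointwise:
  fixes h w x :: real and d dd a G S :: complex
  assumes "\<i> * complex_of_real h * d + complex_of_real (h\<^sup>2 / 2) * dd
          = complex_of_real (w\<^sup>2 / 2 * x\<^sup>2) * a + complex_of_real (h\<^sup>2) * G + complex_of_real (h\<^sup>2) * S"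
  shows "h * Re (d * cnj a) + h\<^sup>2 / 2 * Im (dd * cnj a) = h\<^sup>2 * Im (G * cnj a) + h\<^sup>2 * Im (S * cnj a)"
proof -
  have "Im ((\<i> * complex_of_real h * d + complex_of_real (h\<^sup>2 / 2) * dd) * cnj a) =
        Im ((complex_of_real (w\<^sup>2 / 2 * x\<^sup>2) * a + complex_of_real (h\<^sup>2) * G + complex_of_real (h\<^sup>2) * S) * cnj a)"
    using assms by simp
  then show ?thesis by (simp add: algebra_simps add_divide_distrib diff_divide_distrib)
qed

lemma energy:
  fixes h w :: real and a dt dx dxx G S :: "real \<Rightarrow> complex"
  assumes h: "h > 0"
    and eq: "\<And>x. \<i> * complex_of_real h * dt x + complex_of_real (h\<^sup>2 / 2) * dxx x
          = complex_of_real (w\<^sup>2 / 2 * x\<^sup>2) * a x + complex_of_real (h\<^sup>2) * G x + complex_of_real (h\<^sup>2) * S x"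
    and d1: "\<And>x. (a has_vector_derivative dx x) (at x)"
    and d2: "\<And>x. (dx has_vector_derivative dxx x) (at x)"
    and s: "sq_int a" "sq_int dx" "sq_int dxx" "sq_int dt" "sq_int G" "sq_int S"
  shows "(\<integral>x. Re (dt x * cnj (a x)) \<partial>lborel) \<le> h * (L2norm G + L2norm S) * L2norm a"
proof -
  have z: "(\<integral>x. Im (dxx x * cnj (a x)) \<partial>lborel) = 0"
    by (rule Im_dxx_zero[OF d1 d2 s(1,2,3)])
  have "(\<integral>x. h * Re (dt x * cnj (a x)) + h\<^sup>2 / 2 * Im (dxx x * cnj (a x)) \<partial>lborel) =
        (\<integral>x. h\<^sup>2 * Im (G x * cnj (a x)) + h\<^sup>2 * Im (S x * cnj (a x)) \<partial>lborel)"
    using energy_pointwise[OF eq] by simp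
  then have "h * (\<integral>x. Re (dt x * cnj (a x)) \<partial>lborel) + h\<^sup>2 / 2 * (\<integral>x. Im (dxx x * cnj (a x)) \<partial>lborel) =
        h\<^sup>2 * (\<integral>x. Im (G x * cnj (a x)) \<partial>lborel) + h\<^sup>2 * (\<integral>x. Im (S x * cnj (a x)) \<partial>lborel)"
    using Re_integrable[OF s(4,1)] Im_integrable[OF s(3,1)] Im_integrable[OF s(5,1)] Im_integrable[OF s(6,1)]
    by simp
  then have "h * (\<integral>x. Re (dt x * cnj (a x)) \<partial>lborel) =
        h * (h * ((\<integral>x. Im (G x * cnj (a x)) \<partial>lborel) + (\<integral>x. Im (S x * cnj (a x)) \<partial>lborel)))"
    using z by (simp add: power2_eq_square algebra_simps)
  then have "(\<integral>x. Re (dt x * cnj (a x)) \<partial>lborel) =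
        h * ((\<integral>x. Im (G x * cnj (a x)) \<partial>lborel) + (\<integral>x. Im (S x * cnj (a x)) \<partial>lborel))"
    using h by simp
  also have "\<dots> \<le> h * (L2norm G * L2norm a + L2norm S * L2norm a)"
    using Im_bound[OF s(5,1)] Im_bound[OF s(6,1)] h by (intro mult_left_mono add_mono) auto
  finally show ?thesis by (simp add: algebra_simps)
qed

lemma le_eps_sqrt:
  fixes x y :: real
  assumes "\<And>e. e > 0 \<Longrightarrow> x \<le> sqrt e + y"
  shows "x \<le> y"
proof (rule ccontr)
  assume "\<not> x \<le> y"
  then have p: "(x - y) / 2 > 0" by simp
  have "sqrt (((x - y) / 2)\<^sup>2) = (x - y) / 2" using p by simp
  then have "x \<le> (x - y) / 2 + y" using assms[of "((x - y) / 2)\<^sup>2"] p by simp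
  then show False using p by (simp add: field_simps)
qed

lemma exp_sqrt: "exp (- k) * sqrt n = sqrt (exp (- 2 * k) * n)"
proof -
  have "exp (- 2 * k) = (exp (- k))\<^sup>2" by (simp add: power2_eq_square exp_add[symmetric])
  then show ?thesis by (simp add: real_sqrt_mult)
qed

lemma gronwall_eps:
  fixes N N' g s :: "real \<Rightarrow> real" and T h C0 t1 e :: real
  assumes h: "h > 0" and C0: "C0 \<ge> 0" and e: "e > 0"
    and N0: "N 0 = 0" and Nnn: "\<And>t. t \<in> {0..<T} \<Longrightarrow> N t \<ge> 0"
    and der: "\<And>t. t \<in> {0..<T} \<Longrightarrow> (N has_real_derivative N' t) (at t within {0..<T})"
    and Nb: "\<And>t. t \<in> {0..<T} \<Longrightarrow> N' t \<le> 2 * h * (g t + s t) * sqrt (N t)"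
    and gb: "\<And>t. t \<in> {0..<T} \<Longrightarrow> g t \<le> C0 / (T - t)\<^sup>2 * sqrt (N t)"
    and snn: "\<And>t. s t \<ge> 0"
    and t1: "0 \<le> t1" "t1 < T"
    and si: "s integrable_on {0..t1}"
  shows "exp (- (h * C0 / (T - t1))) * sqrt (N t1) \<le> sqrt e + h * integral {0..t1} s"
proof -
  define K where "K t = h * C0 / (T - t)" for t
  define K' where "K' t = h * C0 / (T - t)\<^sup>2" for t
  define M where "M t = exp (- 2 * K t) * N t" for t
  define Q where "Q t = sqrt (M t + e)" for t
  define M' where "M' t = exp (- 2 * K t) * (N' t - 2 * K' t * N t)" for t
  define Q' where "Q' t = M' t / (2 * sqrt (M t + e))" for t
  have sub: "{0..t1} \<subseteq> {0..<T}" using t1 by auto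
  have Mnn: "M t \<ge> 0" if "t \<in> {0..<T}" for t unfolding M_def using Nnn[OF that] by simp
  have derK: "(K has_real_derivative K' t) (at t within {0..t1})" if "t \<in> {0..t1}" for t
  proof -
    have nz: "T - t \<noteq> 0" using that t1 by auto
    have e1: "K = (\<lambda>t. h * C0 * inverse (T - t))" unfolding K_def[abs_def] by (simp add: divide_inverse)
    have d0: "((\<lambda>t. T - t) has_real_derivative (0 - 1)) (at t within {0..t1})"
      by (rule DERIV_diff[OF DERIV_const DERIV_ident])
    have "((\<lambda>t. inverse (T - t)) has_real_derivative - ((0 - 1) * inverse ((T - t) ^ Suc (Suc 0)))) (at t within {0..t1})"
      by (rule DERIV_inverse_fun[OF d0 nz])
    then have "((\<lambda>t. h * C0 * inverse (T - t)) has_real_derivative h * C0 * - ((0 - 1) * inverse ((T - t) ^ Suc (Suc 0)))) (at t within {0..t1})"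
      by (rule DERIV_cmult)
    moreover have "h * C0 * - ((0 - 1) * inverse ((T - t) ^ Suc (Suc 0))) = K' t"
      unfolding K'_def by (simp add: divide_inverse power2_eq_square)
    ultimately show ?thesis unfolding e1 by simp
  qed
  have derM: "(M has_real_derivative M' t) (at t within {0..t1})" if "t \<in> {0..t1}" for t
  proof -
    have dN: "(N has_real_derivative N' t) (at t within {0..t1})"
      using DERIV_subset[OF der sub] that sub by auto
    have dE: "((\<lambda>t. exp (-2 * K t)) has_real_derivative exp (-2 * K t) * (-2 * K' t)) (at t within {0..t1})"
      by (rule DERIV_chain2[where f=exp and g="\<lambda>t. -2 * K t", OF DERIV_exp DERIV_cmult[OF derK[OF that]]])
    show ?thesis unfolding M_def[abs_def] M'_def
      by (rule DERIV_cong[OF DERIV_mult[OF dE dN]]) (simp add: algebra_simps)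
  qed
  have derQ: "(Q has_vector_derivative Q' t) (at t within {0..t1})" if "t \<in> {0..t1}" for t
  proof -
    have pos: "M t + e > 0" using Mnn[of t] that sub e by auto
    have dMe: "((\<lambda>t. M t + e) has_real_derivative M' t) (at t within {0..t1})"
      using DERIV_add[OF derM[OF that] DERIV_const[of e]] by simp
    have "(Q has_real_derivative (inverse (sqrt (M t + e)) / 2) * M' t) (at t within {0..t1})"
      unfolding Q_def[abs_def]
      by (rule DERIV_chain2[where f=sqrt and g="\<lambda>t. M t + e", OF DERIV_real_sqrt[OF pos] dMe])
    moreover have "inverse (sqrt (M t + e)) / 2 * M' t = Q' t"
      unfolding Q'_def by (metis divide_divide_eq_left divide_inverse_commute mult.commute times_divide_eq_left)
    ultimately have "(Q has_real_derivative Q' t) (at t within {0..t1})" by simp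
    then show ?thesis unfolding has_real_derivative_iff_has_vector_derivative .
  qed
  have Qb: "Q' t \<le> h * s t" if "t \<in> {0..t1}" for t
  proof -
    have tT: "t \<in> {0..<T}" using that sub by auto
    have pos: "M t + e > 0" using Mnn[OF tT] e by auto
    have Tt: "T - t > 0" using tT by auto
    have K'e: "K' t = h * (C0 / (T - t)\<^sup>2)" unfolding K'_def by simp
    have "h * g t * sqrt (N t) \<le> h * (C0 / (T - t)\<^sup>2 * sqrt (N t)) * sqrt (N t)"
      using gb[OF tT] h Nnn[OF tT] by (intro mult_right_mono mult_left_mono) auto
    also have "\<dots> = K' t * N t" using Nnn[OF tT] unfolding K'e
      by (simp only: mult.assoc real_sqrt_mult_self)
    finally have gK: "h * g t * sqrt (N t) \<le> K' t * N t" .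
    have "N' t - 2 * K' t * N t \<le> 2 * h * s t * sqrt (N t)"
      using Nb[OF tT] gK by (simp add: algebra_simps)
    then have "M' t \<le> exp (- 2 * K t) * (2 * h * s t * sqrt (N t))"
      unfolding M'_def by (intro mult_left_mono) auto
    also have "\<dots> = 2 * h * s t * (exp (- 2 * K t) * sqrt (N t))" by simp
    also have "exp (- 2 * K t) * sqrt (N t) \<le> sqrt (M t + e)"
    proof -
      have K0: "K t \<ge> 0" unfolding K_def using h C0 Tt by simp
      have "exp (- 2 * K t) \<le> exp (- K t)" using K0 by simp
      then have "exp (- 2 * K t) * sqrt (N t) \<le> exp (- K t) * sqrt (N t)"
        using Nnn[OF tT] by (intro mult_right_mono) auto
      also have "exp (- K t) * sqrt (N t) = sqrt (M t)"
        unfolding M_def by (rule exp_sqrt)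
      also have "\<dots> \<le> sqrt (M t + e)" using e by simp
      finally show ?thesis .
    qed
    then have "2 * h * s t * (exp (- 2 * K t) * sqrt (N t)) \<le> 2 * h * s t * sqrt (M t + e)"
      using h snn[of t] by (intro mult_left_mono) auto
    finally have "M' t \<le> 2 * h * s t * sqrt (M t + e)" .
    then have "M' t \<le> h * s t * (2 * sqrt (M t + e))" by (simp add: mult_ac)
    moreover have sp: "2 * sqrt (M t + e) > 0" using pos by simp
    ultimately show ?thesis unfolding Q'_def by (simp only: pos_divide_le_eq[OF sp])
  qed
  have "(Q' has_integral (Q t1 - Q 0)) {0..t1}"
    by (rule fundamental_theorem_of_calculus[OF t1(1)], rule derQ, assumption)
  moreover have "((\<lambda>t. h * s t) has_integral h * integral {0..t1} s) {0..t1}"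
    using has_integral_mult_right[OF integrable_integral[OF si]] by simp
  ultimately have "Q t1 - Q 0 \<le> h * integral {0..t1} s"
    by (rule has_integral_le) (use Qb in auto)
  moreover have "Q 0 = sqrt e" unfolding Q_def M_def N0 by simp
  moreover have "exp (- (h * C0 / (T - t1))) * sqrt (N t1) \<le> Q t1"
  proof -
    have "exp (- (h * C0 / (T - t1))) * sqrt (N t1) = sqrt (M t1)"
      unfolding M_def K_def by (rule exp_sqrt)
    also have "\<dots> \<le> Q t1" unfolding Q_def using e by simp
    finally show ?thesis .
  qed
  ultimately show ?thesis by simp
qed

lemma gronwall:
  fixes N N' g s :: "real \<Rightarrow> real" and T h C0 t1 :: real
  assumes h: "h > 0" and C0: "C0 \<ge> 0"
    and N0: "N 0 = 0" and Nnn: "\<And>t. t \<in> {0..<T} \<Longrightarrow> N t \<ge> 0"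
    and der: "\<And>t. t \<in> {0..<T} \<Longrightarrow> (N has_real_derivative N' t) (at t within {0..<T})"
    and Nb: "\<And>t. t \<in> {0..<T} \<Longrightarrow> N' t \<le> 2 * h * (g t + s t) * sqrt (N t)"
    and gb: "\<And>t. t \<in> {0..<T} \<Longrightarrow> g t \<le> C0 / (T - t)\<^sup>2 * sqrt (N t)"
    and snn: "\<And>t. s t \<ge> 0"
    and t1: "0 \<le> t1" "t1 < T"
    and si: "s integrable_on {0..t1}"
  shows "sqrt (N t1) \<le> exp (h * C0 / (T - t1)) * (h * integral {0..t1} s)"
proof -
  have "exp (- (h * C0 / (T - t1))) * sqrt (N t1) \<le> h * integral {0..t1} s"
    by (rule le_eps_sqrt, rule gronwall_eps[OF h C0 _ N0 Nnn der Nb gb snn t1 si]) auto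
  then have "exp (h * C0 / (T - t1)) * (exp (- (h * C0 / (T - t1))) * sqrt (N t1)) \<le>
             exp (h * C0 / (T - t1)) * (h * integral {0..t1} s)"
    by (intro mult_left_mono) auto
  then show ?thesis by (simp add: exp_minus field_simps)
qed

theorem lemma4p7:
  fixes \<omega> :: real
    and a :: "real \<Rightarrow> real \<Rightarrow> real \<Rightarrow> complex"
    and F :: "real \<Rightarrow> (real \<Rightarrow> real \<Rightarrow> complex) \<Rightarrow> real \<Rightarrow> real \<Rightarrow> complex"
    and S :: "real \<Rightarrow> real \<Rightarrow> real \<Rightarrow> complex"
  assumes "\<omega> > 0"
    and sol: "\<And>h. h \<in> {0<..1} \<Longrightarrow> harmonic_solution \<omega> h (pi / (2 * \<omega>)) (a h) (F h (a h)) (S h)"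
    and bound: "\<exists>C0>0. \<forall>h\<in>{0<..1}. \<forall>t\<in>{0..<pi / (2 * \<omega>)}.
                 L2norm (F h (a h) t) \<le> C0 / (pi / (2 * \<omega>) - t)\<^sup>2 * L2norm (a h t)"
  shows "\<exists>C>0. \<forall>h\<in>{0<..1}. \<forall>\<Lambda>\<ge>1. \<forall>t\<in>{0..pi / (2 * \<omega>) - \<Lambda> * h}.
           ennreal (L2norm (a h t))
             \<le> ennreal (C * h) * (\<integral>\<^sup>+ s\<in>{0..pi / (2 * \<omega>) - \<Lambda> * h}. ennreal (L2norm (S h s)) \<partial>lborel)"
proof -
  define T where "T = pi / (2 * \<omega>)"
  obtain C0 where C0: "C0 > 0" and bnd: "\<And>h t. h \<in> {0<..1} \<Longrightarrow> t \<in> {0..<T} \<Longrightarrow>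
      L2norm (F h (a h) t) \<le> C0 / (T - t)\<^sup>2 * L2norm (a h t)"
    using bound unfolding T_def by blast
  show ?thesis unfolding T_def[symmetric]
  proof (intro exI[of _ "exp C0"] conjI ballI allI impI)
    show "exp C0 > 0" by simp
    fix h \<Lambda> t assume hI: "h \<in> {0<..1}" and L: "\<Lambda> \<ge> 1" and t: "t \<in> {0..T - \<Lambda> * h}"
    define T' where "T' = T - \<Lambda> * h"
    have h: "h > 0" "h \<le> 1" using hI by auto
    have Lhp: "\<Lambda> * h > 0" using L h by simp
    have tT: "0 \<le> t" "t < T" "T - t \<ge> \<Lambda> * h" using t Lhp by auto
    have Lh: "\<Lambda> * h \<ge> h" using L h by simp
    have HS: "harmonic_solution \<omega> h T (a h) (F h (a h)) (S h)" using sol[OF hI] unfolding T_def .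
    obtain dt dx dxx :: "real \<Rightarrow> real \<Rightarrow> complex" where
      A1: "\<forall>x. a h 0 x = 0" and
      A2: "\<forall>t\<in>{0..<T}. \<forall>x. ((\<lambda>s. a h s x) has_vector_derivative dt t x) (at t within {0..<T})" and
      A3: "\<forall>t\<in>{0..<T}. \<forall>x. ((a h t) has_vector_derivative dx t x) (at x)
                         \<and> ((dx t) has_vector_derivative dxx t x) (at x)" and
      A4: "\<forall>t\<in>{0..<T}. \<forall>x.
          \<i> * complex_of_real h * dt t x + complex_of_real (h\<^sup>2 / 2) * dxx t x
          = complex_of_real (\<omega>\<^sup>2 / 2 * x\<^sup>2) * a h t x
            + complex_of_real (h\<^sup>2) * F h (a h) t x + complex_of_real (h\<^sup>2) * S h t x" and
      A5: "\<forall>t\<in>{0..<T}. sq_int (a h t) \<and> sq_int (dx t) \<and> sq_int (dxx t)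
                     \<and> sq_int (\<lambda>x. complex_of_real (x\<^sup>2) * a h t x)
                     \<and> sq_int (dt t) \<and> sq_int (F h (a h) t) \<and> sq_int (S h t)" and
      A6: "\<forall>t\<in>{0..<T}.
          ((\<lambda>s. L2norm (\<lambda>x. (a h s x - a h t x) / complex_of_real (s - t) - dt t x))
             \<longlongrightarrow> 0) (at t within {0..<T})" and
      Smeas: "(\<lambda>p. S h (fst p) (snd p)) \<in> borel_measurable (lborel \<Otimes>\<^sub>M lborel)"
      using HS unfolding harmonic_solution_def by blast
    have a0: "\<And>x. a h 0 x = 0" using A1 by blast
    have eqn: "\<And>t x. t \<in> {0..<T} \<Longrightarrow>
          \<i> * complex_of_real h * dt t x + complex_of_real (h\<^sup>2 / 2) * dxx t x
          = complex_of_real (\<omega>\<^sup>2 / 2 * x\<^sup>2) * a h t x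
            + complex_of_real (h\<^sup>2) * F h (a h) t x + complex_of_real (h\<^sup>2) * S h t x"
      using A4 by blast
    have dxd: "\<And>t x. t \<in> {0..<T} \<Longrightarrow> ((a h t) has_vector_derivative dx t x) (at x)
                         \<and> ((dx t) has_vector_derivative dxx t x) (at x)" using A3 by blast
    have sq: "\<And>t. t \<in> {0..<T} \<Longrightarrow> sq_int (a h t) \<and> sq_int (dx t) \<and> sq_int (dxx t)
                     \<and> sq_int (\<lambda>x. complex_of_real (x\<^sup>2) * a h t x)
                     \<and> sq_int (dt t) \<and> sq_int (F h (a h) t) \<and> sq_int (S h t)" using A5 by blast
    have lim: "\<And>t. t \<in> {0..<T} \<Longrightarrow>
          ((\<lambda>s. L2norm (\<lambda>x. (a h s x - a h t x) / complex_of_real (s - t) - dt t x))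
             \<longlongrightarrow> 0) (at t within {0..<T})" using A6 by blast
    define N where "N \<tau> = (\<integral>x. (cmod (a h \<tau> x))\<^sup>2 \<partial>lborel)" for \<tau>
    define N' where "N' \<tau> = 2 * (\<integral>x. Re (dt \<tau> x * cnj (a h \<tau> x)) \<partial>lborel)" for \<tau>
    define s where "s \<tau> = L2norm (S h \<tau>)" for \<tau>
    define g where "g \<tau> = L2norm (F h (a h) \<tau>)" for \<tau>
    have L2N: "L2norm (a h \<tau>) = sqrt (N \<tau>)" for \<tau> unfolding L2norm_def N_def ..
    have Nnn: "N \<tau> \<ge> 0" for \<tau> unfolding N_def by (rule integral_nonneg_AE) auto
    have N0: "N 0 = 0" unfolding N_def a0 by simp
    have der: "(N has_real_derivative N' \<tau>) (at \<tau> within {0..<T})" if "\<tau> \<in> {0..<T}" for \<tau>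
      unfolding N_def[abs_def] N'_def
      by (rule L2_deriv[OF _ that _ lim[OF that]]) (use sq that in auto)
    have Nb: "N' \<tau> \<le> 2 * h * (g \<tau> + s \<tau>) * sqrt (N \<tau>)" if "\<tau> \<in> {0..<T}" for \<tau>
    proof -
      have "(\<integral>x. Re (dt \<tau> x * cnj (a h \<tau> x)) \<partial>lborel) \<le> h * (g \<tau> + s \<tau>) * sqrt (N \<tau>)"
        unfolding g_def s_def L2N[symmetric]
        by (rule energy[OF h(1) eqn[OF that]]) (use dxd[OF that] sq[OF that] in auto)
      then show ?thesis unfolding N'_def by simp
    qed
    have gb: "g \<tau> \<le> C0 / (T - \<tau>)\<^sup>2 * sqrt (N \<tau>)" if "\<tau> \<in> {0..<T}" for \<tau>
      unfolding g_def L2N[symmetric] by (rule bnd[OF hI that])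
    have snn: "s \<tau> \<ge> 0" for \<tau> unfolding s_def by (rule L2norm_nonneg)
    have smeas: "s \<in> borel_measurable lborel"
    proof -
      have "(\<lambda>(\<tau>, x). (cmod (S h \<tau> x))\<^sup>2) \<in> borel_measurable (lborel \<Otimes>\<^sub>M lborel)"
        using Smeas by (simp add: case_prod_beta')
      then have "(\<lambda>\<tau>. \<integral>x. (cmod (S h \<tau> x))\<^sup>2 \<partial>lborel) \<in> borel_measurable lborel"
        by (rule lborel.borel_measurable_lebesgue_integral)
      then show ?thesis unfolding s_def[abs_def] L2norm_def by measurable
    qed
    define J where "J = (\<integral>\<^sup>+ \<tau>\<in>{0..T'}. ennreal (L2norm (S h \<tau>)) \<partial>lborel)"
    define f where "f \<tau> = s \<tau> * indicator {0..T'} \<tau>" for \<tau>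
    have Jf: "J = (\<integral>\<^sup>+ \<tau>. ennreal (f \<tau>) \<partial>lborel)"
      unfolding J_def f_def s_def
      by (intro nn_integral_cong) (auto split: split_indicator)
    show "ennreal (L2norm (a h t)) \<le> ennreal (exp C0 * h) * J"
    proof (cases "J = \<infinity>")
      case True
      have "ennreal (exp C0 * h) > 0" using h by simp
      then have "ennreal (exp C0 * h) * J = \<infinity>" using True h by (simp add: ennreal_mult_top)
      then show ?thesis by simp
    next
      case False
      have fmeas: "f \<in> borel_measurable lborel" unfolding f_def using smeas by measurable
      have fint: "integrable lborel f"
      proof (rule integrableI_bounded[OF fmeas])
        have "(\<integral>\<^sup>+ x. ennreal (norm (f x)) \<partial>lborel) = J"
          unfolding Jf f_def using snn by (intro nn_integral_cong) auto
        then show "(\<integral>\<^sup>+ x. ennreal (norm (f x)) \<partial>lborel) < \<infinity>" using False by (simp add: top.not_eq_extremum)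
      qed
      have JI: "J = ennreal (\<integral>\<tau>. f \<tau> \<partial>lborel)"
        unfolding Jf by (rule nn_integral_eq_integral[OF fint]) (simp add: f_def snn)
      have sub: "{0..t} \<subseteq> {0..T'}" using t unfolding T'_def by auto
      have ind_eq: "indicator {0..t} \<tau> *\<^sub>R f \<tau> = indicator {0..t} \<tau> *\<^sub>R s \<tau>" for \<tau>
        unfolding f_def using sub by (auto split: split_indicator)
      have si: "set_integrable lborel {0..t} s"
        unfolding set_integrable_def ind_eq[symmetric] using fint by (intro integrable_mult_indicator) auto
      have sHK: "s integrable_on {0..t}" and LI: "(LINT x:{0..t}|lborel. s x) = integral {0..t} s"
        using set_borel_integral_eq_integral[OF si] by auto
      have Ile: "integral {0..t} s \<le> (\<integral>\<tau>. f \<tau> \<partial>lborel)"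
        unfolding LI[symmetric] set_lebesgue_integral_def ind_eq[symmetric]
      proof (rule integral_mono)
        show "integrable lborel (\<lambda>\<tau>. indicator {0..t} \<tau> *\<^sub>R f \<tau>)"
          using fint by (intro integrable_mult_indicator) auto
        show "integrable lborel f" by (rule fint)
        show "indicator {0..t} \<tau> *\<^sub>R f \<tau> \<le> f \<tau>" for \<tau>
          using snn[of \<tau>] unfolding f_def by (auto split: split_indicator)
      qed
      have I0: "integral {0..t} s \<ge> 0" by (rule integral_nonneg) (use sHK snn in auto)
      have gr: "sqrt (N t) \<le> exp (h * C0 / (T - t)) * (h * integral {0..t} s)"
        by (rule gronwall[OF h(1) less_imp_le[OF C0] N0 Nnn der Nb gb snn tT(1,2) sHK])
      have "h * C0 / (T - t) \<le> C0"
      proof -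
        have "h \<le> T - t" using tT(3) Lh by linarith
        then have "h * C0 \<le> (T - t) * C0" using C0 by (intro mult_right_mono) auto
        then show ?thesis using tT by (simp add: divide_le_eq mult.commute)
      qed
      then have "exp (h * C0 / (T - t)) \<le> exp C0" by simp
      then have "sqrt (N t) \<le> exp C0 * (h * integral {0..t} s)"
        using gr h I0 by (meson mult_nonneg_nonneg less_imp_le mult_right_mono order_trans)
      also have "\<dots> \<le> exp C0 * h * (\<integral>\<tau>. f \<tau> \<partial>lborel)"
        using Ile h by (simp add: mult.assoc mult_left_mono)
      finally have fin: "sqrt (N t) \<le> exp C0 * h * (\<integral>\<tau>. f \<tau> \<partial>lborel)" .
      have fnn: "(\<integral>\<tau>. f \<tau> \<partial>lborel) \<ge> 0" by (rule integral_nonneg_AE) (simp add: f_def snn)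
      have "ennreal (L2norm (a h t)) \<le> ennreal (exp C0 * h * (\<integral>\<tau>. f \<tau> \<partial>lborel))"
        unfolding L2N using fin by (rule ennreal_leI)
      also have "\<dots> = ennreal (exp C0 * h) * J"
        unfolding JI using h fnn by (simp add: ennreal_mult)
      finally show ?thesis .
    qed
  qed
qed

end
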